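(* Let $T:[0,1)\to[0,1)$ be an interval exchange transformation and let $f:[0,1)\to\mathbb{R}$ be a function of bounded variation. Let $\{T^i\Delta:0\le i<q\}$ be a Rokhlin tower of intervals (i.e. $\Delta$ is an interval and $T^i\Delta$, $0\le i<q$, are pairwise disjoint intervals). Then there exists $a\in\mathbb{R}$ such that \[|f^{(q)}(x)-a|\le \mathrm{Var}_{[0,1)}f\quad\text{and}\quad |f^{(2q)}(x)-2a|\le 2\,\mathrm{Var}_{[0,1)}f\] for all $x\in\bigcup_{i=0}^{q-1}T^i(\Delta\cap T^{-q}\Delta\cap T^{-2q}\Delta)$.
   Context: An interval exchange transformation is a bijection of $[0,1)$ which splits $[0,1)$ into finitely many intervals and rearranges them by translations. $f^{(n)}=\sum_{i=0}^{n-1}f\circ T^i$. $\mathrm{Var}_{[0,1)}f$ is the total variation of $f$. *)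

theory Defs
  imports "HOL-Analysis.Analysis"
begin

definition iet :: "(real \<Rightarrow> real) \<Rightarrow> bool" where
  "iet T \<longleftrightarrow> bij_betw T {0..<1} {0..<1} \<and>
     (\<exists>(n::nat) (a::nat \<Rightarrow> real) (c::nat \<Rightarrow> real).
        a 0 = 0 \<and> a n = 1 \<and> (\<forall>i<n. a i < a (Suc i)) \<and>
        (\<forall>i<n. \<forall>x\<in>{a i..<a (Suc i)}. T x = x + c i))"

definition var_sums01 :: "(real \<Rightarrow> real) \<Rightarrow> real set" where
  "var_sums01 f = {\<Sum>i<n. \<bar>f (x (Suc i)) - f (x i)\<bar> | (n::nat) (x::nat \<Rightarrow> real).
      (\<forall>i\<le>n. x i \<in> {0..<1}) \<and> (\<forall>i<n. x i < x (Suc i))}"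

definition bounded_variation01 :: "(real \<Rightarrow> real) \<Rightarrow> bool" where
  "bounded_variation01 f \<longleftrightarrow> bdd_above (var_sums01 f)"

definition Var01 :: "(real \<Rightarrow> real) \<Rightarrow> real" where
  "Var01 f = Sup (var_sums01 f)"

definition birkhoff_sum :: "(real \<Rightarrow> real) \<Rightarrow> (real \<Rightarrow> real) \<Rightarrow> nat \<Rightarrow> real \<Rightarrow> real" where
  "birkhoff_sum T f n x = (\<Sum>i<n. f ((T ^^ i) x))"

definition iet_preimage :: "(real \<Rightarrow> real) \<Rightarrow> nat \<Rightarrow> real set \<Rightarrow> real set" where
  "iet_preimage T k A = {x \<in> {0..<1}. (T ^^ k) x \<in> A}"

definition rokhlin_tower :: "(real \<Rightarrow> real) \<Rightarrow> real set \<Rightarrow> nat \<Rightarrow> bool" where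
  "rokhlin_tower T D q \<longleftrightarrow> D \<subseteq> {0..<1} \<and> is_interval D \<and>
     (\<forall>i<q. is_interval ((T ^^ i) ` D)) \<and>
     (\<forall>i<q. \<forall>j<q. i \<noteq> j \<longrightarrow> (T ^^ i) ` D \<inter> (T ^^ j) ` D = {})"

end

theory Submission
  imports Defs
begin

fun cs :: "(real \<Rightarrow> real) \<Rightarrow> real list \<Rightarrow> real" where
  "cs f (a # b # xs) = \<bar>f b - f a\<bar> + cs f (b # xs)"
| "cs f _ = 0"

lemma cs_nonneg: "cs f xs \<ge> 0"
  by (induction f xs rule: cs.induct) auto

lemma cs_cons_ge: "cs f (a # xs) \<ge> cs f xs"
  by (cases xs) (auto simp: cs_nonneg)

lemma cs_sum: "cs f xs = (\<Sum>i<length xs - 1. \<bar>f (xs ! Suc i) - f (xs ! i)\<bar>)"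
proof (induction f xs rule: cs.induct)
  case (1 f a b xs)
  have e: "length (a # b # xs) - 1 = Suc (length (b # xs) - 1)" by simp
  have "(\<Sum>i<Suc (length (b # xs) - 1). \<bar>f ((a # b # xs) ! Suc i) - f ((a # b # xs) ! i)\<bar>)
     = \<bar>f b - f a\<bar> + (\<Sum>i<length (b # xs) - 1. \<bar>f ((b # xs) ! Suc i) - f ((b # xs) ! i)\<bar>)"
    by (simp only: sum.lessThan_Suc_shift nth_Cons_Suc nth_Cons_0)
  then show ?case unfolding e cs.simps 1[symmetric] by simp
qed auto

lemma cs_in_var:
  assumes "sorted_wrt (<) xs" "set xs \<subseteq> {0..<1}"
  shows "cs f xs \<in> var_sums01 f"
proof (cases "xs = []")
  case True
  then show ?thesis unfolding var_sums01_def
    by (intro CollectI exI[of _ 0] exI[of _ "\<lambda>_. 0"]) auto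
next
  case False
  let ?n = "length xs - 1"
  have "\<forall>i\<le>?n. xs ! i \<in> {0..<1}" using assms(2) False
    by (metis Suc_pred' length_greater_0_conv less_Suc_eq_le nth_mem subsetD)
  moreover have "\<forall>i<?n. xs ! i < xs ! Suc i" using assms(1)
    by (simp add: sorted_wrt_nth_less)
  ultimately show ?thesis unfolding var_sums01_def cs_sum
    by (intro CollectI exI[of _ ?n] exI[of _ "\<lambda>i. xs ! i"]) auto
qed

lemma chain_exists:
  fixes u v :: "nat \<Rightarrow> real"
  assumes "finite K" "\<forall>k\<in>K. 0 \<le> u k \<and> u k \<le> v k \<and> v k < 1"
    "\<forall>k\<in>K. \<forall>l\<in>K. k \<noteq> l \<longrightarrow> {u k..v k} \<inter> {u l..v l} = {}"
  shows "\<exists>xs. sorted_wrt (<) xs \<and> set xs \<subseteq> (\<Union>k\<in>K. {u k..v k}) \<and>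
             (\<Sum>k\<in>K. \<bar>f (v k) - f (u k)\<bar>) \<le> cs f xs"
  using assms
proof (induction "card K" arbitrary: K rule: less_induct)
  case less
  show ?case
  proof (cases "K = {}")
    case True
    then show ?thesis by (intro exI[of _ "[]"]) auto
  next
    case False
    have "Min (u ` K) \<in> u ` K" using False less.prems(1) by simp
    then obtain k0 where k0: "k0 \<in> K" "u k0 = Min (u ` K)" by auto
    have mn: "\<forall>k\<in>K. u k0 \<le> u k" using k0 less.prems(1) by simp
    let ?K = "K - {k0}"
    have "card ?K < card K" using k0 less.prems(1) by (meson card_Diff1_less)
    then obtain xs where xs: "sorted_wrt (<) xs" "set xs \<subseteq> (\<Union>k\<in>?K. {u k..v k})"
      "(\<Sum>k\<in>?K. \<bar>f (v k) - f (u k)\<bar>) \<le> cs f xs"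
      using less.hyps[of ?K] less.prems by auto
    have gt: "\<forall>z\<in>set xs. v k0 < z"
    proof
      fix z assume "z \<in> set xs"
      then obtain k where k: "k \<in> K" "k \<noteq> k0" "z \<in> {u k..v k}" using xs(2) by blast
      have "u k \<notin> {u k0..v k0}" using less.prems(2,3) k k0(1) by fastforce
      then have "v k0 < u k" using mn k(1) by auto
      then show "v k0 < z" using k(3) by auto
    qed
    have sumK: "(\<Sum>k\<in>K. \<bar>f (v k) - f (u k)\<bar>) = \<bar>f (v k0) - f (u k0)\<bar> + (\<Sum>k\<in>?K. \<bar>f (v k) - f (u k)\<bar>)"
      using k0(1) less.prems(1) by (simp add: sum.remove)
    show ?thesis
    proof (cases "u k0 = v k0")
      case True
      then show ?thesis using xs sumK by (intro exI[of _ xs]) auto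
    next
      case False
      then have uv: "u k0 < v k0" using less.prems(2) k0(1) by force
      have "sorted_wrt (<) (u k0 # v k0 # xs)" using xs(1) gt uv by auto
      moreover have "set (u k0 # v k0 # xs) \<subseteq> (\<Union>k\<in>K. {u k..v k})"
        using xs(2) k0(1) uv by force
      moreover have "(\<Sum>k\<in>K. \<bar>f (v k) - f (u k)\<bar>) \<le> cs f (u k0 # v k0 # xs)"
        using sumK xs(3) cs_cons_ge[where f=f and a="v k0" and xs=xs] by simp
      ultimately show ?thesis by blast
    qed
  qed
qed

lemma pairs_le_var:
  fixes z w :: "nat \<Rightarrow> real" and I :: "nat \<Rightarrow> real set"
  assumes bv: "bounded_variation01 f" and "finite K"
    and "\<forall>k\<in>K. I k \<subseteq> {0..<1} \<and> is_interval (I k) \<and> z k \<in> I k \<and> w k \<in> I k"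
    and "\<forall>k\<in>K. \<forall>l\<in>K. k \<noteq> l \<longrightarrow> I k \<inter> I l = {}"
  shows "(\<Sum>k\<in>K. \<bar>f (z k) - f (w k)\<bar>) \<le> Var01 f"
proof -
  define u where "u k = min (z k) (w k)" for k
  define v where "v k = max (z k) (w k)" for k
  have uvI: "u k \<in> I k \<and> v k \<in> I k" if "k \<in> K" for k
    using assms(3) that unfolding u_def v_def min_def max_def by simp
  have sub: "\<forall>k\<in>K. {u k..v k} \<subseteq> I k"
  proof (intro ballI subsetI)
    fix k t assume k: "k \<in> K" and t: "t \<in> {u k..v k}"
    have "is_interval (I k)" using assms(3) k by blast
    then show "t \<in> I k" using uvI[OF k] t unfolding is_interval_1 by auto
  qed
  have "\<forall>k\<in>K. 0 \<le> u k \<and> u k \<le> v k \<and> v k < 1"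
  proof
    fix k assume k: "k \<in> K"
    have "I k \<subseteq> {0..<1}" using assms(3) k by blast
    then show "0 \<le> u k \<and> u k \<le> v k \<and> v k < 1" using uvI[OF k] unfolding u_def v_def
      by auto
  qed
  moreover have "\<forall>k\<in>K. \<forall>l\<in>K. k \<noteq> l \<longrightarrow> {u k..v k} \<inter> {u l..v l} = {}"
  proof (intro ballI impI)
    fix k l assume "k \<in> K" "l \<in> K" "k \<noteq> l"
    then have "I k \<inter> I l = {}" using assms(4) by blast
    then show "{u k..v k} \<inter> {u l..v l} = {}" using sub \<open>k \<in> K\<close> \<open>l \<in> K\<close> by blast
  qed
  ultimately obtain xs where xs: "sorted_wrt (<) xs" "set xs \<subseteq> (\<Union>k\<in>K. {u k..v k})"
             "(\<Sum>k\<in>K. \<bar>f (v k) - f (u k)\<bar>) \<le> cs f xs"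
    using chain_exists[where K=K and u=u and v=v and f=f, OF assms(2)] by blast
  have "set xs \<subseteq> {0..<1}"
  proof
    fix t assume "t \<in> set xs"
    then obtain k where k: "k \<in> K" "t \<in> {u k..v k}" using xs(2) by blast
    have "I k \<subseteq> {0..<1}" using assms(3) k(1) by blast
    then show "t \<in> {0..<1}" using sub k by blast
  qed
  then have "cs f xs \<le> Var01 f" unfolding Var01_def
    using cs_in_var[OF xs(1)] bv unfolding bounded_variation01_def by (intro cSup_upper) simp_all
  moreover have "(\<Sum>k\<in>K. \<bar>f (z k) - f (w k)\<bar>) = (\<Sum>k\<in>K. \<bar>f (v k) - f (u k)\<bar>)"
    unfolding u_def v_def by (intro sum.cong refl) (simp add: min_def max_def abs_minus_commute)
  ultimately show ?thesis using xs(3) by simp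
qed

lemma shift_sum:
  fixes g :: "nat \<Rightarrow> real"
  assumes "j \<le> q"
  shows "(\<Sum>i<q. g (i + j)) = (\<Sum>k<q. if j \<le> k then g k else g (k + q))"
  using assms
proof (induction j)
  case 0
  then show ?case by simp
next
  case (Suc j)
  have j: "j < q" using Suc by simp
  have A: "(\<Sum>i<q. g (i + Suc j)) = (\<Sum>i<q. g (i + j)) - g j + g (q + j)"
  proof -
    have "(\<Sum>i<Suc q. g (i + j)) = g j + (\<Sum>i<q. g (i + Suc j))"
      by (subst sum.lessThan_Suc_shift) simp
    moreover have "(\<Sum>i<Suc q. g (i + j)) = (\<Sum>i<q. g (i + j)) + g (q + j)" by simp
    ultimately show ?thesis by simp
  qed
  have B: "(\<Sum>k<q. if Suc j \<le> k then g k else g (k + q)) =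
        (\<Sum>k<q. if j \<le> k then g k else g (k + q)) + (g (j + q) - g j)"
  proof -
    have "(\<Sum>k<q. (if Suc j \<le> k then g k else g (k + q)) - (if j \<le> k then g k else g (k + q)))
       = (\<Sum>k<q. if k = j then g (j + q) - g j else 0)"
      by (intro sum.cong) auto
    also have "\<dots> = g (j + q) - g j" using j by simp
    finally show ?thesis by (simp add: sum_subtractf)
  qed
  show ?case using A B Suc by (simp add: add.commute)
qed

lemma sum_double:
  fixes h :: "nat \<Rightarrow> real"
  shows "(\<Sum>i<q + q. h i) = (\<Sum>i<q. h i) + (\<Sum>i<q. h (i + q))"
proof -
  have "(\<Sum>i<m + q. h i) = (\<Sum>i<m. h i) + (\<Sum>i<q. h (i + m))" for m
    by (induction q) (auto simp: add.commute add.left_commute)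
  then show ?thesis .
qed

theorem lemma6p2:
  fixes T f :: "real \<Rightarrow> real" and D :: "real set" and q :: nat
  assumes "iet T"
    and "bounded_variation01 f"
    and "rokhlin_tower T D q"
  shows "\<exists>a::real. \<forall>x \<in> (\<Union>i<q. (T ^^ i) ` (D \<inter> iet_preimage T q D \<inter> iet_preimage T (2*q) D)).
           \<bar>birkhoff_sum T f q x - a\<bar> \<le> Var01 f \<and>
           \<bar>birkhoff_sum T f (2*q) x - 2*a\<bar> \<le> 2 * Var01 f"
proof -
  have bij: "bij_betw T {0..<1} {0..<1}" using assms(1) unfolding iet_def by blast
  have T01: "(T ^^ k) x \<in> {0..<1}" if "x \<in> {0..<1}" for x k
    using that
  proof (induction k)
    case (Suc k)
    then have "(T ^^ k) x \<in> {0..<1}" by blast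
    then have "T ((T ^^ k) x) \<in> {0..<1}" by (rule bij_betw_apply[OF bij])
    then show ?case by simp
  qed simp
  have D01: "D \<subseteq> {0..<1}" and disj: "\<forall>i<q. \<forall>j<q. i \<noteq> j \<longrightarrow> (T ^^ i) ` D \<inter> (T ^^ j) ` D = {}"
    and ivl: "\<forall>i<q. is_interval ((T ^^ i) ` D)"
    using assms(3) unfolding rokhlin_tower_def by auto
  have lev: "(T ^^ k) ` D \<subseteq> {0..<1}" for k using D01 T01 by blast
  define P where "P y j k = (if j \<le> k then (T ^^ k) y else (T ^^ (k + q)) y)" for y j k
  have rep: "birkhoff_sum T f q ((T ^^ j) y) = (\<Sum>k<q. f (P y j k))" if "j < q" for y j
  proof -
    have "birkhoff_sum T f q ((T ^^ j) y) = (\<Sum>i<q. f ((T ^^ (i + j)) y))"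
      unfolding birkhoff_sum_def by (simp add: funpow_add)
    also have "\<dots> = (\<Sum>k<q. if j \<le> k then f ((T ^^ k) y) else f ((T ^^ (k + q)) y))"
      using shift_sum[of j q "\<lambda>i. f ((T ^^ i) y)"] that by simp
    finally show ?thesis unfolding P_def by (simp add: if_distrib)
  qed
  have Pin: "P y j k \<in> (T ^^ k) ` D" if "y \<in> D" "(T ^^ q) y \<in> D" for y j k
  proof (cases "j \<le> k")
    case True then show ?thesis using that unfolding P_def by auto
  next
    case False
    have "(T ^^ (k + q)) y = (T ^^ k) ((T ^^ q) y)" by (simp add: funpow_add)
    then show ?thesis using False that unfolding P_def by auto
  qed
  have C: "\<bar>birkhoff_sum T f q ((T ^^ j) y) - birkhoff_sum T f q ((T ^^ j') y')\<bar> \<le> Var01 f"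
    if "y \<in> D" "(T ^^ q) y \<in> D" "y' \<in> D" "(T ^^ q) y' \<in> D" "j < q" "j' < q" for y y' j j'
  proof -
    have "\<bar>birkhoff_sum T f q ((T ^^ j) y) - birkhoff_sum T f q ((T ^^ j') y')\<bar>
        = \<bar>\<Sum>k<q. f (P y j k) - f (P y' j' k)\<bar>"
      using rep that by (simp add: sum_subtractf)
    also have "\<dots> \<le> (\<Sum>k<q. \<bar>f (P y j k) - f (P y' j' k)\<bar>)" by (rule sum_abs)
    also have "\<dots> \<le> Var01 f"
      using pairs_le_var[OF assms(2), of "{..<q}" "\<lambda>k. (T ^^ k) ` D" "\<lambda>k. P y j k" "\<lambda>k. P y' j' k"]
        lev ivl disj Pin that by auto
    finally show ?thesis .
  qed
  let ?S = "D \<inter> iet_preimage T q D \<inter> iet_preimage T (2*q) D"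
  let ?U = "\<Union>i<q. (T ^^ i) ` ?S"
  show ?thesis
  proof (cases "?U = {}")
    case True then show ?thesis by auto
  next
    case False
    then obtain j0 y0 where j0: "j0 < q" "y0 \<in> ?S" by auto
    define a where "a = birkhoff_sum T f q ((T ^^ j0) y0)"
    have y0: "y0 \<in> D" "(T ^^ q) y0 \<in> D" using j0 unfolding iet_preimage_def by auto
    show ?thesis
    proof (intro exI[of _ a] ballI)
      fix x assume "x \<in> ?U"
      then obtain j y where jy: "j < q" "y \<in> ?S" "x = (T ^^ j) y" by auto
      have y: "y \<in> D" "(T ^^ q) y \<in> D" "(T ^^ q) ((T ^^ q) y) \<in> D"
        using jy unfolding iet_preimage_def by (auto simp: funpow_add mult_2)
      have c1: "\<bar>birkhoff_sum T f q x - a\<bar> \<le> Var01 f"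
        unfolding a_def jy(3) using C[OF y(1,2) y0 jy(1) j0(1)] .
      have xq: "(T ^^ q) x = (T ^^ j) ((T ^^ q) y)"
        unfolding jy(3) by (metis comp_apply funpow_add add.commute)
      have c2: "\<bar>birkhoff_sum T f q ((T ^^ q) x) - a\<bar> \<le> Var01 f"
        unfolding a_def xq using C[OF y(2,3) y0 jy(1) j0(1)] .
      have split: "birkhoff_sum T f (2*q) x = birkhoff_sum T f q x + birkhoff_sum T f q ((T ^^ q) x)"
        unfolding birkhoff_sum_def mult_2 sum_double by (simp add: funpow_add)
      show "\<bar>birkhoff_sum T f q x - a\<bar> \<le> Var01 f \<and>
           \<bar>birkhoff_sum T f (2*q) x - 2*a\<bar> \<le> 2 * Var01 f"
        using c1 c2 split by auto
    qed
  qed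
qed

end
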